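(* Let $X$, $Y$, $(Z,d)$ be metric spaces, $1\le\alpha<\omega_1$, and let $f\colon X\times Y\to Z$ satisfy: (1) the family $\{f^x:x\in X\}\subseteq Z^Y$ has (PECP); (2) for every $y\in Y$ the section $f_y\colon X\to Z$ is of Borel class $\alpha$. Then $f$ is of Borel class $\alpha$.
   Context: For $x\in X$, $y\in Y$: $f^x\colon Y\to Z$, $f^x(y)=f(x,y)$ and $f_y\colon X\to Z$, $f_y(x)=f(x,y)$. A family $\mathscr F\subseteq Z^Y$ has (PECP) if for every nonempty closed $F\subseteq Y$ there is a point $y_0\in F$ such that for every $\varepsilon>0$ there is a neighborhood $U$ of $y_0$ with $d(g(y),g(y_0))<\varepsilon$ for all $y\in U\cap F$ and all $g\in\mathscr F$. In a metric space, sets of additive class $0$ are the open sets, of multiplicative class $0$ the closed sets; for $\alpha\ge1$, sets of additive class $\alpha$ are countable unions of sets of multiplicative classes $<\alpha$, and multiplicative class $\alpha$ sets are complements of additive class $\alpha$ sets. A function between metric spaces is of Borel class $\alpha$ if the preimage of every open set is of additive class $\alpha$. *)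

theory Defs
  imports "HOL-Analysis.Analysis"
begin

text \<open>Countable ordinals are represented by well-orders r (relations in the sense of
  BNF_Wellorder_Relation) with countable field; the ordinal is the order type of r.
  An element i of Field r stands for the ordinal = order type of the strict initial
  segment below i.\<close>

text \<open>Sets of additive class (order type of the segment below i), for i in Field r,
  by well-founded recursion over the strict part of r:
  class 0 = open sets; class beta >= 1 = countable unions of sets of
  multiplicative class < beta, multiplicative class = complement of additive class.\<close>
definition add_class_at :: "'i rel \<Rightarrow> 'i \<Rightarrow> ('a::topological_space) set set" where
  "add_class_at r = wfrec (r - Id) (\<lambda>AC i.
     if (\<forall>j. (j, i) \<notin> r - Id) then {A. open A}
     else {A. \<exists>F::nat \<Rightarrow> 'a set. A = \<Union>(range F) \<and>
                 (\<forall>n. \<exists>j. (j, i) \<in> r - Id \<and> - F n \<in> AC j)})"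

definition additive_class :: "'i rel \<Rightarrow> ('a::topological_space) set \<Rightarrow> bool" where
  "additive_class r A \<longleftrightarrow>
     (if Field r = {} then open A
      else (\<exists>F::nat \<Rightarrow> 'a set. A = \<Union>(range F) \<and>
              (\<forall>n. \<exists>j \<in> Field r. - F n \<in> add_class_at r j)))"

definition multiplicative_class :: "'i rel \<Rightarrow> ('a::topological_space) set \<Rightarrow> bool" where
  "multiplicative_class r A \<longleftrightarrow> additive_class r (- A)"

definition borel_class :: "'i rel \<Rightarrow> ('a::topological_space \<Rightarrow> 'b::topological_space) \<Rightarrow> bool" where
  "borel_class r f \<longleftrightarrow> (\<forall>U. open U \<longrightarrow> additive_class r (f -` U))"

definition PECP :: "('b::metric_space \<Rightarrow> 'c::metric_space) set \<Rightarrow> bool" where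
  "PECP \<F> \<longleftrightarrow> (\<forall>F. closed F \<and> F \<noteq> {} \<longrightarrow>
     (\<exists>y0\<in>F. \<forall>\<epsilon>>0. \<exists>U. open U \<and> y0 \<in> U \<and>
        (\<forall>y\<in>U \<inter> F. \<forall>g\<in>\<F>. dist (g y) (g y0) < \<epsilon>)))"

end

theory Submission
  imports Defs
begin

definition preds :: "'i rel \<Rightarrow> 'i \<Rightarrow> 'i set" where
  "preds r i = {j. (j, i) \<in> r - Id}"

definition ACs :: "'i rel \<Rightarrow> 'i set \<Rightarrow> ('a::topological_space) set \<Rightarrow> bool" where
  "ACs r S A \<longleftrightarrow> (\<exists>F::nat \<Rightarrow> 'a set. A = \<Union>(range F) \<and> (\<forall>n. \<exists>j\<in>S. - F n \<in> add_class_at r j))"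

lemma wf_r: "Well_order r \<Longrightarrow> wf (r - Id)"
  by (simp add: well_order_on_def)

lemma add_class_at_unfold:
  assumes "Well_order r"
  shows "add_class_at r i = (if preds r i = {} then {A. open A} else {A. ACs r (preds r i) A})"
proof -
  have w: "wf (r - Id)" using assms by (rule wf_r)
  show ?thesis
    unfolding add_class_at_def
    apply (subst wfrec[OF w])
    apply (simp add: preds_def ACs_def add_class_at_def cut_apply cong: conj_cong)
    apply (auto simp: ACs_def add_class_at_def fun_eq_iff)
    apply blast
    done
qed

lemma C_iff1: "Well_order r \<Longrightarrow> preds r i \<noteq> {} \<Longrightarrow> A \<in> add_class_at r i \<longleftrightarrow> ACs r (preds r i) A"
  by (subst add_class_at_unfold) auto

lemma C_iff0: "Well_order r \<Longrightarrow> preds r i = {} \<Longrightarrow> A \<in> add_class_at r i \<longleftrightarrow> open A"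
  by (subst add_class_at_unfold) auto

lemma additive_class_ACs: "Field r \<noteq> {} \<Longrightarrow> additive_class r A = ACs r (Field r) A"
  by (simp add: additive_class_def ACs_def)

lemma preds_sub: "preds r i \<subseteq> Field r"
  by (auto simp: preds_def Field_def)

lemma open_Union_closed:
  fixes W :: "'a::metric_space set"
  assumes "open W"
  shows "\<exists>K::nat \<Rightarrow> 'a set. (\<forall>n. closed (K n)) \<and> W = \<Union>(range K)"
proof (cases "W = UNIV")
  case True
  then show ?thesis by (intro exI[of _ "\<lambda>_. UNIV"]) auto
next
  case False
  define K where "K n = {y. 1 / real (Suc n) \<le> infdist y (- W)}" for n
  have "closed (K n)" for n
    unfolding K_def
    by (intro closed_Collect_le continuous_on_const continuous_on_infdist continuous_on_id)
  moreover have "W = \<Union>(range K)"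
  proof
    show "W \<subseteq> \<Union>(range K)"
    proof
      fix y assume "y \<in> W"
      have ne: "- W \<noteq> {}" using False by auto
      have cl: "closed (- W)" using assms by (simp add: closed_Compl)
      have "y \<notin> - W" using \<open>y \<in> W\<close> by simp
      then have "infdist y (- W) \<noteq> 0" using in_closed_iff_infdist_zero[OF cl ne, of y] by simp
      then have "infdist y (- W) > 0"
        using infdist_nonneg[of y "-W"] by linarith
      then obtain n where "1 / real (Suc n) < infdist y (- W)"
        using nat_approx_posE by blast
      then show "y \<in> \<Union>(range K)" by (auto simp: K_def intro!: less_imp_le)
    qed
    show "\<Union>(range K) \<subseteq> W"
    proof
      fix y assume "y \<in> \<Union>(range K)"
      then obtain n where "1 / real (Suc n) \<le> infdist y (- W)" by (auto simp: K_def)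
      moreover have "0 < 1 / real (Suc n)" by simp
      ultimately have "infdist y (- W) \<noteq> 0" by linarith
      then show "y \<in> W" using infdist_zero[of y "- W"] by blast
    qed
  qed
  ultimately show ?thesis by blast
qed

lemma C_open:
  fixes A :: "'a::metric_space set"
  assumes wo: "Well_order r" and "open A"
  shows "A \<in> add_class_at r i"
  using wf_r[OF wo] \<open>open A\<close>
proof (induction i arbitrary: A rule: wf_induct_rule)
  case (less i)
  show ?case
  proof (cases "preds r i = {}")
    case True
    then show ?thesis using less.prems by (simp add: C_iff0[OF wo True])
  next
    case False
    then obtain j where j: "j \<in> preds r i" by blast
    obtain K :: "nat \<Rightarrow> 'a set" where K: "\<And>n. closed (K n)" "A = \<Union>(range K)"
      using open_Union_closed[OF less.prems] by blast
    have "- K n \<in> add_class_at r j" for n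
      using less.IH[of j "- K n"] j K(1)[of n] by (simp add: preds_def open_Compl)
    then have "ACs r (preds r i) A" unfolding ACs_def using K j by (intro exI[of _ K]) blast
    then show ?thesis by (simp add: C_iff1[OF wo False])
  qed
qed

lemma ACs_single: "j \<in> S \<Longrightarrow> - B \<in> add_class_at r j \<Longrightarrow> ACs r S B"
  unfolding ACs_def by (intro exI[of _ "\<lambda>_. B"]) auto

lemma ACsE:
  fixes A :: "'a::topological_space set" and r :: "'i rel"
  assumes "ACs r S A"
  obtains F :: "nat \<Rightarrow> 'a set" and J :: "nat \<Rightarrow> 'i"
  where "A = \<Union>(range F)" "\<And>n. J n \<in> S" "\<And>n. - F n \<in> add_class_at r (J n)"
proof -
  from assms obtain F0 :: "nat \<Rightarrow> 'a set"
    where F0: "A = \<Union>(range F0) \<and> (\<forall>n. \<exists>j\<in>S. - F0 n \<in> add_class_at r j)"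
    unfolding ACs_def ..
  have "\<forall>n. \<exists>j. j \<in> S \<and> - F0 n \<in> add_class_at r j"
    using conjunct2[OF F0] by (simp add: Bex_def)
  from choice[OF this] obtain J0 where J0: "\<forall>n. J0 n \<in> S \<and> - F0 n \<in> add_class_at r (J0 n)" ..
  show ?thesis
    by (rule that[of F0 J0]) (simp_all add: conjunct1[OF F0] J0)
qed

lemma ACs_family:
  fixes M :: "'k \<Rightarrow> 'a::topological_space set" and r :: "'i rel"
  assumes "\<And>\<xi>. ACs r S (M \<xi>)"
  obtains F :: "'k \<Rightarrow> nat \<Rightarrow> 'a set" and J :: "'k \<Rightarrow> nat \<Rightarrow> 'i"
  where "\<And>\<xi>. M \<xi> = \<Union>(range (F \<xi>))" "\<And>\<xi> n. J \<xi> n \<in> S"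
    "\<And>\<xi> n. - F \<xi> n \<in> add_class_at r (J \<xi> n)"
proof -
  have "\<exists>p::(nat \<Rightarrow> 'a set) \<times> (nat \<Rightarrow> 'i). M \<xi> = \<Union>(range (fst p)) \<and>
          (\<forall>n. snd p n \<in> S \<and> - fst p n \<in> add_class_at r (snd p n))" for \<xi>
  proof -
    obtain F0 :: "nat \<Rightarrow> 'a set" and J0 :: "nat \<Rightarrow> 'i"
      where "M \<xi> = \<Union>(range F0)" "\<And>n. J0 n \<in> S" "\<And>n. - F0 n \<in> add_class_at r (J0 n)"
      by (rule ACsE[OF assms[of \<xi>]], rule that)
    then show ?thesis by (intro exI[of _ "(F0, J0)"]) simp
  qed
  then have "\<forall>\<xi>. \<exists>p::(nat \<Rightarrow> 'a set) \<times> (nat \<Rightarrow> 'i). M \<xi> = \<Union>(range (fst p)) \<and>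
          (\<forall>n. snd p n \<in> S \<and> - fst p n \<in> add_class_at r (snd p n))" ..
  from choice[OF this] obtain P :: "'k \<Rightarrow> (nat \<Rightarrow> 'a set) \<times> (nat \<Rightarrow> 'i)" where P: "\<forall>\<xi>. M \<xi> = \<Union>(range (fst (P \<xi>))) \<and>
          (\<forall>n. snd (P \<xi>) n \<in> S \<and> - fst (P \<xi>) n \<in> add_class_at r (snd (P \<xi>) n))" ..
  show ?thesis
    by (rule that[of "\<lambda>\<xi>. fst (P \<xi>)" "\<lambda>\<xi>. snd (P \<xi>)"]) (simp_all add: P)
qed

lemma ACs_Union:
  fixes A :: "nat \<Rightarrow> 'a::topological_space set" and r :: "'i rel"
  assumes "\<And>n::nat. ACs r S (A n)"
  shows "ACs r S (\<Union>n. A n)"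
proof -
  obtain F :: "nat \<Rightarrow> nat \<Rightarrow> 'a set" and J :: "nat \<Rightarrow> nat \<Rightarrow> 'i"
    where F: "\<And>n. A n = \<Union>(range (F n))" "\<And>n m. J n m \<in> S"
      "\<And>n m. - F n m \<in> add_class_at r (J n m)"
    by (rule ACs_family[where M=A, OF assms], rule that)
  define G where "G k = (case prod_decode k of (n, m) \<Rightarrow> F n m)" for k
  define JG where "JG k = (case prod_decode k of (n, m) \<Rightarrow> J n m)" for k
  have G: "\<exists>n m. G k = F n m \<and> JG k = J n m" for k
    by (cases "prod_decode k") (auto simp: G_def JG_def)
  have "(\<Union>n. A n) = \<Union>(range G)"
  proof
    show "(\<Union>n. A n) \<subseteq> \<Union>(range G)"
    proof
      fix x assume "x \<in> (\<Union>n. A n)"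
      then obtain n where "x \<in> A n" by blast
      then have "x \<in> \<Union>(range (F n))" using F(1)[of n] by simp
      then obtain m where "x \<in> F n m" by blast
      then have "x \<in> G (prod_encode (n, m))" by (simp add: G_def)
      then show "x \<in> \<Union>(range G)" by blast
    qed
    show "\<Union>(range G) \<subseteq> (\<Union>n. A n)"
    proof
      fix x assume "x \<in> \<Union>(range G)"
      then obtain k where "x \<in> G k" by blast
      then obtain n m where "x \<in> F n m" using G[of k] by auto
      then have "x \<in> A n" using F(1)[of n] by blast
      then show "x \<in> (\<Union>n. A n)" by blast
    qed
  qed
  moreover have "\<exists>j\<in>S. - G k \<in> add_class_at r j" for k
  proof -
    have "JG k \<in> S \<and> - G k \<in> add_class_at r (JG k)"
      using G[of k] F(2,3) by auto
    then show ?thesis by blast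
  qed
  ultimately show ?thesis unfolding ACs_def
    by (intro exI[of _ G]) auto
qed


lemma ACs_Un:
  fixes A B :: "'a::topological_space set" and r :: "'i rel"
  assumes "ACs r S A" "ACs r S B"
  shows "ACs r S (A \<union> B)"
proof -
  have eq: "A \<union> B = (\<Union>n::nat. if n = 0 then A else B)" by auto
  show ?thesis unfolding eq by (rule ACs_Union) (simp add: assms)
qed

lemma ACs_open:
  fixes A :: "'a::metric_space set"
  assumes wo: "Well_order r" and "S \<noteq> {}" and "open A"
  shows "ACs r S A"
proof -
  obtain j where j: "j \<in> S" using assms by blast
  obtain K :: "nat \<Rightarrow> 'a set" where K: "\<And>n. closed (K n)" "A = \<Union>(range K)"
    using open_Union_closed[OF assms(3)] by blast
  have "ACs r S (K n)" for n
  proof -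
    have "open (- K n)" using K(1)[of n] by (simp add: open_Compl)
    then have "- K n \<in> add_class_at r j" by (rule C_open[OF wo])
    then show ?thesis by (rule ACs_single[OF j])
  qed
  then show ?thesis unfolding K(2) by (rule ACs_Union)
qed

lemma C_Un_open:
  fixes A :: "'a::metric_space set"
  assumes wo: "Well_order r" and "A \<in> add_class_at r i" and "open Op"
  shows "A \<union> Op \<in> add_class_at r i"
proof (cases "preds r i = {}")
  case True
  then show ?thesis using assms by (simp add: C_iff0[OF wo True] open_Un)
next
  case False
  then have "ACs r (preds r i) A" using assms by (simp add: C_iff1[OF wo False])
  then have "ACs r (preds r i) (A \<union> Op)"
    using ACs_Un ACs_open[OF wo False assms(3)] by blast
  then show ?thesis by (simp add: C_iff1[OF wo False])
qed

lemma ACs_Int_closed: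
  fixes A :: "'a::metric_space set" and r :: "'i rel"
  assumes wo: "Well_order r" and "ACs r S A" and "closed K"
  shows "ACs r S (A \<inter> K)"
proof -
  obtain F :: "nat \<Rightarrow> 'a set" and J :: "nat \<Rightarrow> 'i"
    where F: "A = \<Union>(range F)" "\<And>n. J n \<in> S" "\<And>n. - F n \<in> add_class_at r (J n)"
    by (rule ACsE[OF assms(2)], rule that)
  have eq: "A \<inter> K = (\<Union>n. F n \<inter> K)" using F(1) by auto
  have "ACs r S (F n \<inter> K)" for n
  proof (rule ACs_single[OF F(2)[of n]])
    have "open (- K)" using assms(3) by (simp add: open_Compl)
    then have "- F n \<union> - K \<in> add_class_at r (J n)"
      by (rule C_Un_open[OF wo F(3)])
    then show "- (F n \<inter> K) \<in> add_class_at r (J n)" by simp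
  qed
  then show ?thesis unfolding eq by (rule ACs_Union)
qed

lemma ACs_Int_open:
  fixes A :: "'a::metric_space set"
  assumes wo: "Well_order r" and "ACs r S A" and "open W"
  shows "ACs r S (A \<inter> W)"
proof -
  obtain K :: "nat \<Rightarrow> 'a set" where K: "\<And>n. closed (K n)" "W = \<Union>(range K)"
    using open_Union_closed[OF assms(3)] by blast
  have "A \<inter> W = (\<Union>n. A \<inter> K n)" using K by auto
  then show ?thesis using ACs_Union[of r S "\<lambda>n. A \<inter> K n"] ACs_Int_closed[OF wo assms(2) K(1)] by simp
qed

lemma C_Int_open:
  fixes A :: "'a::metric_space set"
  assumes wo: "Well_order r" and "A \<in> add_class_at r i" and "open W"
  shows "A \<inter> W \<in> add_class_at r i"
proof (cases "preds r i = {}")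
  case True
  then show ?thesis using assms by (simp add: C_iff0[OF wo True] open_Int)
next
  case False
  then have "ACs r (preds r i) A" using assms by (simp add: C_iff1[OF wo False])
  then have "ACs r (preds r i) (A \<inter> W)"
    using ACs_Int_open[OF wo _ assms(3)] by blast
  then show ?thesis by (simp add: C_iff1[OF wo False])
qed

lemma C_vimage:
  fixes g :: "'m::metric_space \<Rightarrow> 'n::metric_space" and r :: "'i rel" and A :: "'n set"
  assumes wo: "Well_order r" and g: "continuous_on UNIV g"
  shows "A \<in> add_class_at r i \<Longrightarrow> g -` A \<in> add_class_at r i"
  using wf_r[OF wo]
proof (induction i arbitrary: A rule: wf_induct_rule)
  case (less i)
  show ?case
  proof (cases "preds r i = {}")
    case True
    then show ?thesis using less.prems g
      by (auto intro: open_vimage simp: C_iff0[OF wo True])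
  next
    case False
    then have AA: "ACs r (preds r i) A" using less.prems by (simp add: C_iff1[OF wo False])
    obtain F :: "nat \<Rightarrow> 'n set" and J :: "nat \<Rightarrow> 'i"
      where F: "A = \<Union>(range F)" "\<And>n. J n \<in> preds r i" "\<And>n. - F n \<in> add_class_at r (J n)"
      by (rule ACsE[OF AA], rule that)
    have eq: "g -` A = (\<Union>n. g -` F n)" using F(1) by auto
    have "ACs r (preds r i) (g -` F n)" for n
    proof (rule ACs_single[OF F(2)[of n]])
      have "g -` (- F n) \<in> add_class_at r (J n)"
        using less.IH[of "J n" "- F n"] F(2,3) by (simp add: preds_def)
      then show "- (g -` F n) \<in> add_class_at r (J n)" by (simp add: vimage_Compl)
    qed
    then have "ACs r (preds r i) (g -` A)" unfolding eq by (rule ACs_Union)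
    then show ?thesis by (simp add: C_iff1[OF wo False])
  qed
qed

lemma ACs_vimage:
  fixes g :: "'m::metric_space \<Rightarrow> 'n::metric_space" and r :: "'i rel" and A :: "'n set"
  assumes wo: "Well_order r" and g: "continuous_on UNIV g" and "ACs r S A"
  shows "ACs r S (g -` A)"
proof -
  obtain F :: "nat \<Rightarrow> 'n set" and J :: "nat \<Rightarrow> 'i"
    where F: "A = \<Union>(range F)" "\<And>n. J n \<in> S" "\<And>n. - F n \<in> add_class_at r (J n)"
    by (rule ACsE[OF assms(3)], rule that)
  have eq: "g -` A = (\<Union>n. g -` F n)" using F(1) by auto
  have "ACs r S (g -` F n)" for n
  proof (rule ACs_single[OF F(2)[of n]])
    have "g -` (- F n) \<in> add_class_at r (J n)"
      by (rule C_vimage[OF wo g F(3)])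
    then show "- (g -` F n) \<in> add_class_at r (J n)" by (simp add: vimage_Compl)
  qed
  then show ?thesis unfolding eq by (rule ACs_Union)
qed


definition sep :: "real \<Rightarrow> ('k \<Rightarrow> 'a::metric_space set) \<Rightarrow> bool" where
  "sep \<delta> M \<longleftrightarrow> (\<forall>\<xi> \<eta> s t. \<xi> \<noteq> \<eta> \<longrightarrow> s \<in> M \<xi> \<longrightarrow> t \<in> M \<eta> \<longrightarrow> \<delta> \<le> dist s t)"

lemma sep_mono: "sep \<delta> M \<Longrightarrow> (\<And>\<xi>. N \<xi> \<subseteq> M \<xi>) \<Longrightarrow> sep \<delta> N"
  unfolding sep_def by blast

lemma sep_closed:
  fixes M :: "'k \<Rightarrow> 'a::metric_space set"
  assumes "\<delta> > 0" "sep \<delta> M" "\<And>\<xi>. closed (M \<xi>)"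
  shows "closed (\<Union>(range M))"
proof -
  have "\<exists>e>0. ball t e \<subseteq> - \<Union>(range M)" if t: "t \<notin> \<Union>(range M)" for t
  proof (cases "\<exists>\<xi> s. s \<in> M \<xi> \<and> dist t s < \<delta> / 2")
    case True
    then obtain \<xi> s where s: "s \<in> M \<xi>" "dist t s < \<delta> / 2" by blast
    have "open (- M \<xi>)" using assms(3) by (simp add: open_Compl)
    moreover have "t \<in> - M \<xi>" using t by auto
    ultimately obtain e where e: "e > 0" "ball t e \<subseteq> - M \<xi>"
      using open_contains_ball by blast
    have "ball t (min e (\<delta>/2)) \<subseteq> - \<Union>(range M)"
    proof
      fix u assume u: "u \<in> ball t (min e (\<delta>/2))"
      show "u \<in> - \<Union>(range M)"
      proof
        assume "u \<in> \<Union>(range M)"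
        then obtain \<eta> where "u \<in> M \<eta>" by blast
        show False
        proof (cases "\<eta> = \<xi>")
          case True
          then show False using e u \<open>u \<in> M \<eta>\<close> by auto
        next
          case False
          then have "\<delta> \<le> dist s u" using assms(2) s \<open>u \<in> M \<eta>\<close> unfolding sep_def by metis
          moreover have "dist s u \<le> dist s t + dist t u" by (rule dist_triangle)
          moreover have "dist t u < \<delta>/2" using u by simp
          ultimately show False using s by (simp add: dist_commute)
        qed
      qed
    qed
    then show ?thesis using e \<open>\<delta> > 0\<close> by (intro exI[of _ "min e (\<delta>/2)"]) auto
  next
    case False
    then have "ball t (\<delta>/2) \<subseteq> - \<Union>(range M)" by auto
    then show ?thesis using \<open>\<delta> > 0\<close> by (intro exI[of _ "\<delta>/2"]) auto
  qed
  then have "open (- \<Union>(range M))" by (simp add: open_contains_ball)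
  then show ?thesis by (simp add: closed_open)
qed

lemma sep_nbhd:
  fixes M :: "'k \<Rightarrow> 'a::metric_space set"
  assumes "\<delta> > 0" "sep \<delta> M"
  defines "W \<equiv> \<lambda>\<xi>. (\<Union>s\<in>M \<xi>. ball s (\<delta>/3))"
  shows "sep (\<delta>/3) W" "\<And>\<xi>. open (W \<xi>)" "\<And>\<xi>. M \<xi> \<subseteq> W \<xi>"
proof -
  show "open (W \<xi>)" for \<xi> unfolding W_def by auto
  show "M \<xi> \<subseteq> W \<xi>" for \<xi>
  proof
    fix t assume "t \<in> M \<xi>"
    then show "t \<in> W \<xi>" unfolding W_def using assms(1) by (intro UN_I[of t]) auto
  qed
  show "sep (\<delta>/3) W" unfolding sep_def
  proof (intro allI impI)
    fix \<xi> \<eta> s' t' assume ne: "\<xi> \<noteq> \<eta>" and s': "s' \<in> W \<xi>" and t': "t' \<in> W \<eta>"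
    obtain s where s: "s \<in> M \<xi>" "dist s s' < \<delta>/3" using s' unfolding W_def by auto
    obtain t where t: "t \<in> M \<eta>" "dist t t' < \<delta>/3" using t' unfolding W_def by auto
    have "\<delta> \<le> dist s t" using assms(2) ne s t unfolding sep_def by blast
    moreover have "dist s t \<le> dist s s' + dist s' t" by (rule dist_triangle)
    moreover have "dist s' t \<le> dist s' t' + dist t' t" by (rule dist_triangle)
    moreover have "dist t' t = dist t t'" by (rule dist_commute)
    ultimately show "\<delta>/3 \<le> dist s' t'" using s t by linarith
  qed
qed

lemma sep_disj:
  assumes "sep \<delta> W" "\<delta> > 0" "t \<in> W \<xi>" "t \<in> W \<eta>"
  shows "\<xi> = \<eta>"
proof (rule ccontr)
  assume "\<xi> \<noteq> \<eta>"
  then have "\<delta> \<le> dist t t" using assms(1,3,4) unfolding sep_def by blast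
  then show False using assms(2) by simp
qed

lemma sep_AC_step:
  fixes M :: "'k \<Rightarrow> 'a::metric_space set" and r :: "'i rel"
  assumes wo: "Well_order r" and S: "countable S" "S \<noteq> {}"
    and IH: "\<And>j \<delta> (N::'k \<Rightarrow> 'a set). j \<in> S \<Longrightarrow> \<delta> > 0 \<Longrightarrow> sep \<delta> N \<Longrightarrow>
               (\<forall>\<xi>. - N \<xi> \<in> add_class_at r j) \<Longrightarrow> - \<Union>(range N) \<in> add_class_at r j"
    and d: "\<delta> > 0" "sep \<delta> M" and M: "\<And>\<xi>. ACs r S (M \<xi>)"
  shows "ACs r S (\<Union>(range M))"
proof -
  obtain F :: "'k \<Rightarrow> nat \<Rightarrow> 'a set" and J :: "'k \<Rightarrow> nat \<Rightarrow> 'i"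
    where F1: "\<And>\<xi>. M \<xi> = \<Union>(range (F \<xi>))" and J: "\<And>\<xi> m. J \<xi> m \<in> S"
      "\<And>\<xi> m. - F \<xi> m \<in> add_class_at r (J \<xi> m)"
    by (rule ACs_family[where M=M, OF M], rule that)
  define e where "e = from_nat_into S"
  have eS: "e l \<in> S" for l using S by (simp add: e_def from_nat_into)
  define B where "B m l = (\<Union>\<xi>. if J \<xi> m = e l then F \<xi> m else {})" for m l
  have "ACs r S (B m l)" for m l
  proof -
    have "sep \<delta> (\<lambda>\<xi>. if J \<xi> m = e l then F \<xi> m else {})"
      by (rule sep_mono[OF d(2)]) (auto simp: F1)
    moreover have "- (if J \<xi> m = e l then F \<xi> m else {}) \<in> add_class_at r (e l)" for \<xi>
      using J(2)[of \<xi> m] C_open[OF wo, of UNIV "e l"] by auto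
    ultimately have "- B m l \<in> add_class_at r (e l)"
      unfolding B_def using IH[OF eS d(1)] by blast
    then show ?thesis by (rule ACs_single[OF eS])
  qed
  then have "ACs r S (\<Union>m. \<Union>l. B m l)" by (intro ACs_Union) auto
  moreover have "\<Union>(range M) = (\<Union>m. \<Union>l. B m l)"
  proof
    show "\<Union>(range M) \<subseteq> (\<Union>m. \<Union>l. B m l)"
    proof
      fix x assume "x \<in> \<Union>(range M)"
      then obtain \<xi> m where x: "x \<in> F \<xi> m" using F1 by auto
      obtain l where "from_nat_into S l = J \<xi> m" using from_nat_into_surj[OF S(1) J(1)] by blast
      then have "x \<in> B m l" using x unfolding B_def e_def by auto
      then show "x \<in> (\<Union>m. \<Union>l. B m l)" by blast
    qed
    show "(\<Union>m. \<Union>l. B m l) \<subseteq> \<Union>(range M)"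
      unfolding B_def using F1 by (auto split: if_splits)
  qed
  ultimately show ?thesis by simp
qed


lemma sep_main:
  fixes r :: "'i rel"
  assumes wo: "Well_order r" and cf: "countable (Field r)"
  shows "\<forall>\<delta> (M::'k \<Rightarrow> 'a::metric_space set). \<delta> > 0 \<longrightarrow> sep \<delta> M \<longrightarrow>
           ((\<forall>\<xi>. M \<xi> \<in> add_class_at r i) \<longrightarrow> \<Union>(range M) \<in> add_class_at r i) \<and>
           ((\<forall>\<xi>. - M \<xi> \<in> add_class_at r i) \<longrightarrow> - \<Union>(range M) \<in> add_class_at r i)"
  using wf_r[OF wo]
proof (induction i rule: wf_induct_rule)
  case (less i)
  show ?case
  proof (cases "preds r i = {}")
    case True
    show ?thesis
    proof (intro allI impI conjI)
      fix \<delta> and M :: "'k \<Rightarrow> 'a set"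
      assume "\<delta> > 0" "sep \<delta> M"
      {
        assume "\<forall>\<xi>. M \<xi> \<in> add_class_at r i"
        then show "\<Union>(range M) \<in> add_class_at r i"
          by (auto simp: C_iff0[OF wo True])
      next
        assume "\<forall>\<xi>. - M \<xi> \<in> add_class_at r i"
        then have cl: "\<And>\<xi>. closed (M \<xi>)" by (simp add: C_iff0[OF wo True] closed_open)
        have "closed (\<Union>(range M))" by (rule sep_closed[OF \<open>\<delta> > 0\<close> \<open>sep \<delta> M\<close> cl])
        then show "- \<Union>(range M) \<in> add_class_at r i"
          by (simp only: C_iff0[OF wo True] open_Compl)
      }
    qed
  next
    case False
    define S where "S = preds r i"
    have S: "countable S" "S \<noteq> {}"
      using False countable_subset[OF preds_sub cf] unfolding S_def by simp_all
    have IH: "\<forall>\<delta> (M::'k \<Rightarrow> 'a set). \<delta> > 0 \<longrightarrow> sep \<delta> M \<longrightarrow>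
           ((\<forall>\<xi>. M \<xi> \<in> add_class_at r j) \<longrightarrow> \<Union>(range M) \<in> add_class_at r j) \<and>
           ((\<forall>\<xi>. - M \<xi> \<in> add_class_at r j) \<longrightarrow> - \<Union>(range M) \<in> add_class_at r j)"
      if "j \<in> S" for j
      by (rule less.IH) (use that in \<open>simp add: S_def preds_def\<close>)
    have IHa: "\<Union>(range N) \<in> add_class_at r j"
      if "j \<in> S" "\<delta> > 0" "sep \<delta> N" "\<forall>\<xi>. N \<xi> \<in> add_class_at r j" for j \<delta> and N :: "'k \<Rightarrow> 'a set"
      using IH[OF that(1), rule_format, OF that(2,3)] that(4) by blast
    have IHb: "- \<Union>(range N) \<in> add_class_at r j"
      if "j \<in> S" "\<delta> > 0" "sep \<delta> N" "\<forall>\<xi>. - N \<xi> \<in> add_class_at r j" for j \<delta> and N :: "'k \<Rightarrow> 'a set"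
      using IH[OF that(1), rule_format, OF that(2,3)] that(4) by blast
    show ?thesis
    proof (intro allI impI conjI)
      fix \<delta> and M :: "'k \<Rightarrow> 'a set"
      assume d: "\<delta> > 0" "sep \<delta> M"
      {
        assume "\<forall>\<xi>. M \<xi> \<in> add_class_at r i"
        then have Mac: "\<And>\<xi>. ACs r S (M \<xi>)" by (simp add: C_iff1[OF wo False] S_def)
        have "ACs r S (\<Union>(range M))"
          by (rule sep_AC_step[OF wo S IHb d Mac])
        then show "\<Union>(range M) \<in> add_class_at r i"
          by (simp add: C_iff1[OF wo False] S_def)
      next
        assume "\<forall>\<xi>. - M \<xi> \<in> add_class_at r i"
        then have "\<And>\<xi>. ACs r S (- M \<xi>)" by (simp add: C_iff1[OF wo False] S_def)
        obtain F :: "'k \<Rightarrow> nat \<Rightarrow> 'a set" and J :: "'k \<Rightarrow> nat \<Rightarrow> 'i"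
          where F1: "\<And>\<xi>. - M \<xi> = \<Union>(range (F \<xi>))" and J: "\<And>\<xi> m. J \<xi> m \<in> S"
            "\<And>\<xi> m. - F \<xi> m \<in> add_class_at r (J \<xi> m)"
          by (rule ACs_family[where M="\<lambda>\<xi>. - M \<xi>", OF \<open>\<And>\<xi>. ACs r S (- M \<xi>)\<close>], rule that)
        define e where "e = from_nat_into S"
        have eS: "e l \<in> S" for l using S by (simp add: e_def from_nat_into)
        define W where "W = (\<lambda>\<xi>. (\<Union>s\<in>M \<xi>. ball s (\<delta>/3)))"
        have W1: "sep (\<delta>/3) W" unfolding W_def by (rule sep_nbhd(1)[OF d])
        have W2: "\<And>\<xi>. open (W \<xi>)" unfolding W_def by (rule sep_nbhd(2)[OF d])
        have W3: "\<And>\<xi>. M \<xi> \<subseteq> W \<xi>" unfolding W_def by (rule sep_nbhd(3)[OF d])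
        note W = W1 W2 W3
        have d3: "\<delta>/3 > 0" using d by simp
        define G where "G m l \<xi> = (if J \<xi> m = e l then - F \<xi> m else UNIV) \<inter> W \<xi>" for m l \<xi>
        define H where "H m l = \<Union>(range (G m l))" for m l
        have "H m l \<in> add_class_at r (e l)" for m l
        proof -
          have sepG: "sep (\<delta>/3) (G m l)" by (rule sep_mono[OF W(1)]) (auto simp: G_def)
          have GC: "G m l \<xi> \<in> add_class_at r (e l)" for \<xi>
            unfolding G_def
            by (rule C_Int_open[OF wo _ W(2)]) (use J(2)[of \<xi> m] C_open[OF wo, of UNIV "e l"] in auto)
          show ?thesis unfolding H_def by (rule IHa[OF eS d3 sepG]) (use GC in blast)
        qed
        then have "ACs r S (- H m l)" for m l
          by (intro ACs_single[OF eS[of l]]) simp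
        then have A1: "ACs r S (\<Union>m. \<Union>l. - H m l)" by (intro ACs_Union) auto
        have "\<Union>(range M) = (\<Inter>m. \<Inter>l. H m l)"
        proof
          show "\<Union>(range M) \<subseteq> (\<Inter>m. \<Inter>l. H m l)"
          proof
            fix t assume "t \<in> \<Union>(range M)"
            then obtain \<xi> where t: "t \<in> M \<xi>" by blast
            then have "t \<in> W \<xi>" using W(3) by blast
            moreover have "t \<notin> F \<xi> m" for m using t F1[of \<xi>] by blast
            ultimately have "t \<in> G m l \<xi>" for m l unfolding G_def by auto
            then show "t \<in> (\<Inter>m. \<Inter>l. H m l)" unfolding H_def by blast
          qed
          show "(\<Inter>m. \<Inter>l. H m l) \<subseteq> \<Union>(range M)"
          proof
            fix t assume t: "t \<in> (\<Inter>m. \<Inter>l. H m l)"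
            then obtain \<xi> where "t \<in> G 0 0 \<xi>" unfolding H_def by blast
            then have t\<xi>: "t \<in> W \<xi>" unfolding G_def by auto
            have "t \<notin> F \<xi> m" for m
            proof -
              obtain l where l: "e l = J \<xi> m" using from_nat_into_surj[OF S(1) J(1)] e_def by metis
              obtain \<eta> where "t \<in> G m l \<eta>" using t unfolding H_def by blast
              then have "t \<in> W \<eta>" "t \<in> (if J \<eta> m = e l then - F \<eta> m else UNIV)"
                unfolding G_def by auto
              moreover have "\<eta> = \<xi>" using sep_disj[OF W(1) d3 \<open>t \<in> W \<eta>\<close> t\<xi>] .
              ultimately show ?thesis using l by auto
            qed
            then have "t \<notin> - M \<xi>" using F1[of \<xi>] by blast
            then show "t \<in> \<Union>(range M)" by blast
          qed
        qed
        then have "- \<Union>(range M) = (\<Union>m. \<Union>l. - H m l)" by auto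
        then have "ACs r S (- \<Union>(range M))" using A1 by simp
        then show "- \<Union>(range M) \<in> add_class_at r i"
          by (simp add: C_iff1[OF wo False] S_def)
      }
    qed
  qed
qed


lemma not_inj_set: "\<not> inj (h :: 'b set \<Rightarrow> 'b)"
proof
  assume inj: "inj h"
  define Q where "Q = {h B | B. h B \<notin> B}"
  show False
  proof (cases "h Q \<in> Q")
    case True
    then obtain B where "h Q = h B" "h B \<notin> B" unfolding Q_def by blast
    then have "Q = B" using inj by (simp add: inj_eq)
    then show False using True \<open>h B \<notin> B\<close> by simp
  next
    case False
    then have "h Q \<in> Q" unfolding Q_def by blast
    then show False using False by simp
  qed
qed

lemma decomp:
  fixes f :: "'a::metric_space \<times> 'b::metric_space \<Rightarrow> 'c::metric_space"
  assumes P: "PECP {(\<lambda>y. f (x, y)) | x. True}" and eps: "\<epsilon> > 0"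
  shows "\<exists>(D :: 'b set \<Rightarrow> nat \<Rightarrow> 'b set) (y0 :: 'b set \<Rightarrow> 'b).
           (\<forall>i k. closed (D i k)) \<and> (\<forall>k. sep (1 / real (Suc k)) (\<lambda>i. D i k)) \<and>
           (\<forall>i k y x. y \<in> D i k \<longrightarrow> dist (f (x, y)) (f (x, y0 i)) < \<epsilon>) \<and>
           (\<forall>y. \<exists>i k. y \<in> D i k)"
proof -
  from well_ordering[where 'a="'b set"] obtain Wo :: "'b set rel"
    where Wo0: "Well_order Wo \<and> Field Wo = UNIV" ..
  have Wo: "Well_order Wo" "Field Wo = UNIV" using Wo0 by (rule conjunct1, rule conjunct2)
  define R where "R = Wo - Id"
  have wfR: "wf R" unfolding R_def by (rule wf_r[OF Wo(1)])
  have tot: "i = j \<or> (i, j) \<in> R \<or> (j, i) \<in> R" for i j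
  proof (cases "i = j")
    case False
    have "total_on (Field Wo) Wo"
      using Wo(1) by (simp add: well_order_on_def linear_order_on_def)
    then have "(i, j) \<in> Wo \<or> (j, i) \<in> Wo"
      using False unfolding total_on_def Wo(2) by simp
    then show ?thesis using False unfolding R_def by auto
  qed simp
  define Good where "Good F p \<longleftrightarrow> open (fst p) \<and> snd p \<in> F \<and> snd p \<in> fst p \<and>
      (\<forall>y\<in>fst p \<inter> F. \<forall>x. dist (f (x, y)) (f (x, snd p)) < \<epsilon>)" for F and p :: "'b set \<times> 'b"
  have PE: "\<exists>p. Good F p" if "closed F" "F \<noteq> {}" for F
  proof -
    have H0: "\<exists>y0\<in>F. \<forall>e>0. \<exists>U. open U \<and> y0 \<in> U \<and>
        (\<forall>y\<in>U \<inter> F. \<forall>g\<in>{(\<lambda>y. f (x, y)) | x. True}. dist (g y) (g y0) < e)"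
      by (rule mp[OF spec[OF P[unfolded PECP_def], of F] conjI[OF that]])
    then obtain y0 where y0: "y0 \<in> F" and H: "\<forall>e>0. \<exists>U. open U \<and> y0 \<in> U \<and>
        (\<forall>y\<in>U \<inter> F. \<forall>g\<in>{(\<lambda>y. f (x, y)) | x. True}. dist (g y) (g y0) < e)" ..
    have "\<exists>U. open U \<and> y0 \<in> U \<and>
        (\<forall>y\<in>U \<inter> F. \<forall>g\<in>{(\<lambda>y. f (x, y)) | x. True}. dist (g y) (g y0) < \<epsilon>)"
      by (rule mp[OF spec[OF H, of \<epsilon>] eps])
    then obtain U where U: "open U \<and> y0 \<in> U \<and>
        (\<forall>y\<in>U \<inter> F. \<forall>g\<in>{(\<lambda>y. f (x, y)) | x. True}. dist (g y) (g y0) < \<epsilon>)" ..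
    have "\<forall>y\<in>U \<inter> F. \<forall>x. dist (f (x, y)) (f (x, y0)) < \<epsilon>"
    proof (intro ballI allI)
      fix y x assume y: "y \<in> U \<inter> F"
      have fam: "(\<lambda>y. f (x, y)) \<in> {(\<lambda>y. f (x, y)) | x. True}" by blast
      have "\<forall>g\<in>{(\<lambda>y. f (x, y)) | x. True}. dist (g y) (g y0) < \<epsilon>"
        using U y by (meson)
      from bspec[OF this fam] show "dist (f (x, y)) (f (x, y0)) < \<epsilon>" by simp
    qed
    then have "Good F (U, y0)" unfolding Good_def using U y0 by simp
    then show ?thesis by (rule exI)
  qed
  define step where "step g i = (let F = - (\<Union>j\<in>{j. (j, i) \<in> R}. fst (g j)) in
      if \<exists>p. Good F p then (SOME p. Good F p) else ({}, undefined))"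
    for g :: "'b set \<Rightarrow> 'b set \<times> 'b" and i
  define T where "T = wfrec R step"
  have T: "T i = step T i" for i
  proof -
    have "T i = step (cut T R i) i" unfolding T_def by (rule wfrec[OF wfR])
    also have "(\<Union>j\<in>{j. (j, i) \<in> R}. fst (cut T R i j)) = (\<Union>j\<in>{j. (j, i) \<in> R}. fst (T j))"
      by (rule SUP_cong) (auto simp: cut_apply)
    then have "step (cut T R i) i = step T i" unfolding step_def by simp
    finally show ?thesis .
  qed
  define U where "U i = fst (T i)" for i
  define y0 where "y0 i = snd (T i)" for i
  define Rem where "Rem i = (\<Union>j\<in>{j. (j, i) \<in> R}. U j)" for i
  have TU: "T i = (if \<exists>p. Good (- Rem i) p then (SOME p. Good (- Rem i) p) else ({}, undefined))" for i
    using T[of i] unfolding step_def Rem_def U_def Let_def by simp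
  have Uo: "open (U i)" for i
  proof (cases "\<exists>p. Good (- Rem i) p")
    case True
    then have "Good (- Rem i) (T i)" using TU[of i] someI_ex[OF True] by simp
    then show ?thesis unfolding Good_def U_def by simp
  next
    case False
    then show ?thesis using TU[of i] unfolding U_def by simp
  qed
  have Remo: "open (Rem i)" for i unfolding Rem_def using Uo by blast
  have Gd: "Good (- Rem i) (T i)" if "- Rem i \<noteq> {}" for i
  proof -
    have "closed (- Rem i)" using Remo[of i] by (simp add: closed_Compl)
    then have ex: "\<exists>p. Good (- Rem i) p" using PE that by blast
    then show ?thesis using TU[of i] someI_ex[OF ex] by simp
  qed
  have cover: "\<exists>i. y \<in> U i" for y
  proof (rule ccontr)
    assume "\<not> (\<exists>i. y \<in> U i)"
    then have "y \<in> - Rem i" for i unfolding Rem_def by blast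
    then have G: "Good (- Rem i) (T i)" for i using Gd by blast
    have "inj y0"
    proof (rule injI)
      fix i j assume eq: "y0 i = y0 j"
      show "i = j"
      proof (rule ccontr)
        assume "i \<noteq> j"
        then consider "(i, j) \<in> R" | "(j, i) \<in> R" using tot by blast
        then show False
        proof cases
          case 1
          have "y0 i \<in> U i" using G[of i] unfolding Good_def U_def y0_def by simp
          then have "y0 i \<in> Rem j" unfolding Rem_def using 1 by blast
          moreover have "y0 j \<in> - Rem j" using G[of j] unfolding Good_def y0_def by simp
          ultimately show False using eq by simp
        next
          case 2
          have "y0 j \<in> U j" using G[of j] unfolding Good_def U_def y0_def by simp
          then have "y0 j \<in> Rem i" unfolding Rem_def using 2 by blast
          moreover have "y0 i \<in> - Rem i" using G[of i] unfolding Good_def y0_def by simp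
          ultimately show False using eq by simp
        qed
      qed
    qed
    then show False using not_inj_set by blast
  qed
  define D where "D i k = {y. ball y (1 / real (Suc k)) \<subseteq> U i} \<inter> - Rem i" for i k
  have "closed (D i k)" for i k
  proof -
    have eq: "{y. ball y (1 / real (Suc k)) \<subseteq> U i} = - (\<Union>z\<in>- U i. ball z (1 / real (Suc k)))"
      by (auto simp: dist_commute)
    have "closed {y. ball y (1 / real (Suc k)) \<subseteq> U i}"
      unfolding eq by (rule closed_Compl) auto
    moreover have "closed (- Rem i)" using Remo[of i] by (simp add: closed_Compl)
    ultimately show ?thesis unfolding D_def by (rule closed_Int)
  qed
  moreover have "sep (1 / real (Suc k)) (\<lambda>i. D i k)" for k
    unfolding sep_def
  proof (intro allI impI)
    fix i j s t assume ij: "i \<noteq> j" and s: "s \<in> D i k" and t: "t \<in> D j k"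
    from ij tot consider "(i, j) \<in> R" | "(j, i) \<in> R" by blast
    then show "1 / real (Suc k) \<le> dist s t"
    proof cases
      case 1
      have "t \<notin> U i" using t 1 unfolding D_def Rem_def by blast
      moreover have "ball s (1 / real (Suc k)) \<subseteq> U i" using s unfolding D_def by blast
      ultimately show ?thesis by (metis mem_ball not_le subsetD)
    next
      case 2
      have "s \<notin> U j" using s 2 unfolding D_def Rem_def by blast
      moreover have "ball t (1 / real (Suc k)) \<subseteq> U j" using t unfolding D_def by blast
      ultimately show ?thesis by (metis dist_commute mem_ball not_le subsetD)
    qed
  qed
  moreover have "dist (f (x, y)) (f (x, y0 i)) < \<epsilon>" if "y \<in> D i k" for i k y x
  proof -
    have "y \<in> ball y (1 / real (Suc k))" by simp
    then have yU: "y \<in> U i" using that unfolding D_def by blast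
    have yR: "y \<in> - Rem i" using that unfolding D_def by blast
    then have "Good (- Rem i) (T i)" using Gd by blast
    then show ?thesis using yU yR unfolding Good_def U_def y0_def by blast
  qed
  moreover have "\<forall>y. \<exists>i k. y \<in> D i k"
  proof
    fix y show "\<exists>i k. y \<in> D i k"
  proof -
    obtain i0 where "y \<in> U i0" using cover by blast
    then have "i0 \<in> {i. y \<in> U i}" by simp
    then obtain i where i1: "i \<in> {i. y \<in> U i}" and i2: "\<And>j. (j, i) \<in> R \<Longrightarrow> j \<notin> {i. y \<in> U i}"
      by (metis wfE_min[OF wfR])
    have yR: "y \<in> - Rem i" using i2 unfolding Rem_def by blast
    have "\<exists>e>0. ball y e \<subseteq> U i" using Uo[of i] i1 by (simp add: open_contains_ball)
    then obtain e where e: "e > 0" "ball y e \<subseteq> U i" by blast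
    obtain k where k: "1 / real (Suc k) < e" using nat_approx_posE[OF e(1)] by blast
    have "ball y (1 / real (Suc k)) \<subseteq> ball y e" using k by (simp add: subset_ball)
    then have "ball y (1 / real (Suc k)) \<subseteq> U i" using e(2) by (rule subset_trans)
    then have "y \<in> D i k" unfolding D_def using yR by blast
    then show ?thesis by blast
  qed
  qed
  ultimately show ?thesis
    by (intro exI[of _ D] exI[of _ y0] conjI allI impI) auto
qed


lemma sep_union_ACs:
  fixes M :: "'k \<Rightarrow> 'a::metric_space set" and r :: "'i rel"
  assumes wo: "Well_order r" and cf: "countable (Field r)" and ne: "Field r \<noteq> {}"
    and d: "\<delta> > 0" "sep \<delta> M" and M: "\<And>\<xi>. ACs r (Field r) (M \<xi>)"
  shows "ACs r (Field r) (\<Union>(range M))"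
proof -
  have IHb: "- \<Union>(range N) \<in> add_class_at r j"
    if "j \<in> Field r" "\<delta>' > 0" "sep \<delta>' N" "\<forall>\<xi>. - N \<xi> \<in> add_class_at r j" for j \<delta>' and N :: "'k \<Rightarrow> 'a set"
    using sep_main[OF wo cf, of j, rule_format, OF that(2,3)] that(4) by blast
  show ?thesis by (rule sep_AC_step[OF wo cf ne IHb d M])
qed

theorem corollary3p20:
  fixes f :: "('a::metric_space \<times> 'b::metric_space) \<Rightarrow> 'c::metric_space"
    and r :: "'i rel"
  assumes "Well_order r"
    and "countable (Field r)"
    and "Field r \<noteq> {}"
    and "PECP {(\<lambda>y. f (x, y)) | x. True}"
    and "\<forall>y. borel_class r (\<lambda>x. f (x, y))"
  shows "borel_class r f"
proof -
  note wo = assms(1) and cf = assms(2) and ne = assms(3) and P = assms(4)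
  have secs: "ACs r (Field r) ((\<lambda>x. f (x, y)) -` Ov)" if "open Ov" for y Ov
    using assms(5) that unfolding borel_class_def by (simp add: additive_class_ACs[OF ne])
  show ?thesis unfolding borel_class_def
  proof (intro allI impI)
    fix V :: "'c set" assume V: "open V"
    show "additive_class r (f -` V)"
    proof (cases "V = UNIV")
      case True
      then show ?thesis using ACs_open[OF wo ne, of UNIV] by (simp add: additive_class_ACs[OF ne])
    next
      case False
      define \<rho> where "\<rho> z = infdist z (- V)" for z
      have nV: "- V \<noteq> {}" using False by auto
      have cV: "closed (- V)" using V by (simp add: closed_Compl)
      have inV: "z \<in> V \<longleftrightarrow> \<rho> z > 0" for z
      proof -
        have "z \<notin> - V \<longleftrightarrow> \<rho> z \<noteq> 0" unfolding \<rho>_def using in_closed_iff_infdist_zero[OF cV nV] by simp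
        moreover have "\<rho> z \<ge> 0" unfolding \<rho>_def by (rule infdist_nonneg)
        ultimately show ?thesis by auto
      qed
      have rho_tri: "\<rho> z \<le> \<rho> w + dist z w" for z w unfolding \<rho>_def by (rule infdist_triangle)
      define ep where "ep n = 1 / (2 * real (Suc n))" for n
      have ep_pos: "ep n > 0" for n unfolding ep_def by simp
      have "\<forall>n. \<exists>p :: ('b set \<Rightarrow> nat \<Rightarrow> 'b set) \<times> ('b set \<Rightarrow> 'b).
           (\<forall>i k. closed (fst p i k)) \<and> (\<forall>k. sep (1 / real (Suc k)) (\<lambda>i. fst p i k)) \<and>
           (\<forall>i k y x. y \<in> fst p i k \<longrightarrow> dist (f (x, y)) (f (x, snd p i)) < ep n) \<and>
           (\<forall>y. \<exists>i k. y \<in> fst p i k)"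
      proof
        fix n
        obtain D :: "'b set \<Rightarrow> nat \<Rightarrow> 'b set" and y0 :: "'b set \<Rightarrow> 'b" where
          "(\<forall>i k. closed (D i k)) \<and> (\<forall>k. sep (1 / real (Suc k)) (\<lambda>i. D i k)) \<and>
           (\<forall>i k y x. y \<in> D i k \<longrightarrow> dist (f (x, y)) (f (x, y0 i)) < ep n) \<and>
           (\<forall>y. \<exists>i k. y \<in> D i k)"
          using decomp[OF P ep_pos[of n]] by (elim exE)
        then show "\<exists>p :: ('b set \<Rightarrow> nat \<Rightarrow> 'b set) \<times> ('b set \<Rightarrow> 'b).
           (\<forall>i k. closed (fst p i k)) \<and> (\<forall>k. sep (1 / real (Suc k)) (\<lambda>i. fst p i k)) \<and>
           (\<forall>i k y x. y \<in> fst p i k \<longrightarrow> dist (f (x, y)) (f (x, snd p i)) < ep n) \<and>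
           (\<forall>y. \<exists>i k. y \<in> fst p i k)"
          by (intro exI[of _ "(D, y0)"]) simp
      qed
      from choice[OF this] obtain PP :: "nat \<Rightarrow> ('b set \<Rightarrow> nat \<Rightarrow> 'b set) \<times> ('b set \<Rightarrow> 'b)"
        where PP: "\<forall>n. (\<forall>i k. closed (fst (PP n) i k)) \<and> (\<forall>k. sep (1 / real (Suc k)) (\<lambda>i. fst (PP n) i k)) \<and>
           (\<forall>i k y x. y \<in> fst (PP n) i k \<longrightarrow> dist (f (x, y)) (f (x, snd (PP n) i)) < ep n) \<and>
           (\<forall>y. \<exists>i k. y \<in> fst (PP n) i k)" ..
      define DD where "DD n = fst (PP n)" for n
      define Y0 where "Y0 n = snd (PP n)" for n
      have DDc: "closed (DD n i k)" for n i k using PP unfolding DD_def by blast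
      have DDs: "sep (1 / real (Suc k)) (\<lambda>i. DD n i k)" for n k using PP unfolding DD_def by blast
      have DDa: "dist (f (x, y)) (f (x, Y0 n i)) < ep n" if "y \<in> DD n i k" for n i k y x
        using PP that unfolding DD_def Y0_def by blast
      have DDcov: "\<exists>i k. y \<in> DD n i k" for n y using PP unfolding DD_def by blast
      define Q where "Q n k i = fst -` {x. ep n < \<rho> (f (x, Y0 n i))} \<inter> snd -` DD n i k" for n k i
      have eq: "f -` V = (\<Union>n. \<Union>k. \<Union>(range (Q n k)))"
      proof
        show "f -` V \<subseteq> (\<Union>n. \<Union>k. \<Union>(range (Q n k)))"
        proof
          fix p assume "p \<in> f -` V"
          obtain x y where p: "p = (x, y)" by (cases p)
          have pos: "\<rho> (f (x, y)) > 0" using \<open>p \<in> f -` V\<close> inV p by simp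
          obtain n where n: "1 / real (Suc n) < \<rho> (f (x, y))" using nat_approx_posE[OF pos] by blast
          obtain i k where ik: "y \<in> DD n i k" using DDcov by blast
          have "\<rho> (f (x, y)) \<le> \<rho> (f (x, Y0 n i)) + dist (f (x, y)) (f (x, Y0 n i))" by (rule rho_tri)
          moreover have "dist (f (x, y)) (f (x, Y0 n i)) < ep n" by (rule DDa[OF ik])
          moreover have "1 / real (Suc n) = 2 * ep n" unfolding ep_def by (simp add: field_simps)
          ultimately have "ep n < \<rho> (f (x, Y0 n i))" using n by linarith
          then have "p \<in> Q n k i" unfolding Q_def using p ik by simp
          then show "p \<in> (\<Union>n. \<Union>k. \<Union>(range (Q n k)))" by blast
        qed
        show "(\<Union>n. \<Union>k. \<Union>(range (Q n k))) \<subseteq> f -` V"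
        proof
          fix p assume "p \<in> (\<Union>n. \<Union>k. \<Union>(range (Q n k)))"
          then obtain n k i where "p \<in> Q n k i" by blast
          obtain x y where p: "p = (x, y)" by (cases p)
          have a: "ep n < \<rho> (f (x, Y0 n i))" and ik: "y \<in> DD n i k"
            using \<open>p \<in> Q n k i\<close> p unfolding Q_def by simp_all
          have "\<rho> (f (x, Y0 n i)) \<le> \<rho> (f (x, y)) + dist (f (x, Y0 n i)) (f (x, y))" by (rule rho_tri)
          moreover have "dist (f (x, Y0 n i)) (f (x, y)) < ep n" using DDa[OF ik] by (simp add: dist_commute)
          ultimately have "\<rho> (f (x, y)) > 0" using a by linarith
          then show "p \<in> f -` V" using inV p by simp
        qed
      qed
      have cfst: "continuous_on UNIV (fst :: 'a \<times> 'b \<Rightarrow> 'a)"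
        by (rule continuous_on_fst[OF continuous_on_id])
      have QA: "ACs r (Field r) (Q n k i)" for n k i
      proof -
        have "open {z. ep n < \<rho> z}" unfolding \<rho>_def
          by (intro open_Collect_less continuous_on_const continuous_on_infdist continuous_on_id)
        then have "ACs r (Field r) ((\<lambda>x. f (x, Y0 n i)) -` {z. ep n < \<rho> z})" by (rule secs)
        then have "ACs r (Field r) {x. ep n < \<rho> (f (x, Y0 n i))}" by (simp add: vimage_def)
        then have "ACs r (Field r) (fst -` {x. ep n < \<rho> (f (x, Y0 n i))} :: ('a \<times> 'b) set)"
          by (rule ACs_vimage[OF wo cfst])
        moreover have "closed (snd -` DD n i k :: ('a \<times> 'b) set)" by (rule closed_vimage_snd[OF DDc])
        ultimately show ?thesis unfolding Q_def by (rule ACs_Int_closed[OF wo])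
      qed
      have Qs: "sep (1 / real (Suc k)) (Q n k)" for n k
      proof -
        have "sep (1 / real (Suc k)) (\<lambda>i. (snd -` DD n i k :: ('a \<times> 'b) set))"
          unfolding sep_def
        proof (intro allI impI)
          fix i j and s t :: "'a \<times> 'b"
          assume "i \<noteq> j" "s \<in> snd -` DD n i k" "t \<in> snd -` DD n j k"
          then have "1 / real (Suc k) \<le> dist (snd s) (snd t)"
            using DDs[of k n] unfolding sep_def by auto
          also have "\<dots> \<le> dist s t" by (rule dist_snd_le)
          finally show "1 / real (Suc k) \<le> dist s t" .
        qed
        then show ?thesis by (rule sep_mono) (auto simp: Q_def)
      qed
      have "ACs r (Field r) (\<Union>(range (Q n k)))" for n k
        by (rule sep_union_ACs[OF wo cf ne _ Qs QA]) simp
      then have "ACs r (Field r) (\<Union>n. \<Union>k. \<Union>(range (Q n k)))"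
        by (intro ACs_Union)
      then show ?thesis unfolding eq by (simp add: additive_class_ACs[OF ne])
    qed
  qed
qed


end
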